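(* Let $L$ be a distributive lattice with $|L|\ge2$. Then the only projection bands of $\mathrm{FBL}\langle L\rangle$ are $\{0\}$ and $\mathrm{FBL}\langle L\rangle$.
   Context: $L^*$ is the set of all lattice homomorphisms $x^*:L\to[-1,1]$; for $x\in L$, $\delta_x:L^*\to\mathbb R$ is $\delta_x(x^* )=x^*(x)$. A function $f:L^*\to\mathbb R$ is positively homogeneous if $f(\lambda x^* )=\lambda f(x^* )$ whenever $\lambda\ge0$ and $\lambda x^*\in L^*$; for such $f$, $\|f\|=\sup\{\sum_{i=1}^m|f(x_i^* )|: m\in\mathbb N,\ x_i^*\in L^*,\ \sup_{x\in L}\sum_{i=1}^m|x_i^*(x)|\le1\}$. $\mathrm{FBL}\langle L\rangle$ is the norm closure of the vector sublattice generated by $\{\delta_x:x\in L\}$ inside the Banach lattice of positively homogeneous functions on $L^*$ with finite norm, with pointwise order and operations. *)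

theory Defs
  imports Complex_Main
begin

definition Lstar :: "('a::distrib_lattice \<Rightarrow> real) set" where
  "Lstar = {\<phi>. (\<forall>x. -1 \<le> \<phi> x \<and> \<phi> x \<le> 1) \<and>
               (\<forall>x y. \<phi> (sup x y) = max (\<phi> x) (\<phi> y)) \<and>
               (\<forall>x y. \<phi> (inf x y) = min (\<phi> x) (\<phi> y))}"

text \<open>Functions L* \<rightarrow> R are represented as functions vanishing outside L*.\<close>
definition delta :: "'a::distrib_lattice \<Rightarrow> (('a \<Rightarrow> real) \<Rightarrow> real)" where
  "delta x = (\<lambda>\<phi>. if \<phi> \<in> Lstar then \<phi> x else 0)"

definition pos_homogeneous :: "(('a::distrib_lattice \<Rightarrow> real) \<Rightarrow> real) \<Rightarrow> bool" where
  "pos_homogeneous f \<longleftrightarrow> (\<forall>\<phi>\<in>Lstar. \<forall>c::real. c \<ge> 0 \<longrightarrow> (\<lambda>x. c * \<phi> x) \<in> Lstar \<longrightarrow>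
       f (\<lambda>x. c * \<phi> x) = c * f \<phi>)"

definition norm_sums :: "(('a::distrib_lattice \<Rightarrow> real) \<Rightarrow> real) \<Rightarrow> real set" where
  "norm_sums f = {(\<Sum>\<phi>\<leftarrow>xs. \<bar>f \<phi>\<bar>) | xs. set xs \<subseteq> Lstar \<and> (\<forall>x. (\<Sum>\<phi>\<leftarrow>xs. \<bar>\<phi> x\<bar>) \<le> 1)}"

definition fbl_norm :: "(('a::distrib_lattice \<Rightarrow> real) \<Rightarrow> real) \<Rightarrow> real" where
  "fbl_norm f = Sup (norm_sums f)"

definition PH :: "(('a::distrib_lattice \<Rightarrow> real) \<Rightarrow> real) set" where
  "PH = {f. (\<forall>\<phi>. \<phi> \<notin> Lstar \<longrightarrow> f \<phi> = 0) \<and> pos_homogeneous f \<and> bdd_above (norm_sums f)}"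

inductive_set gen_sublattice :: "(('a::distrib_lattice \<Rightarrow> real) \<Rightarrow> real) set" where
  gen_delta: "delta x \<in> gen_sublattice"
| gen_zero: "(\<lambda>\<phi>. 0) \<in> gen_sublattice"
| gen_add: "f \<in> gen_sublattice \<Longrightarrow> g \<in> gen_sublattice \<Longrightarrow> (\<lambda>\<phi>. f \<phi> + g \<phi>) \<in> gen_sublattice"
| gen_scale: "f \<in> gen_sublattice \<Longrightarrow> (\<lambda>\<phi>. c * f \<phi>) \<in> gen_sublattice"
| gen_max: "f \<in> gen_sublattice \<Longrightarrow> g \<in> gen_sublattice \<Longrightarrow> (\<lambda>\<phi>. max (f \<phi>) (g \<phi>)) \<in> gen_sublattice"
| gen_min: "f \<in> gen_sublattice \<Longrightarrow> g \<in> gen_sublattice \<Longrightarrow> (\<lambda>\<phi>. min (f \<phi>) (g \<phi>)) \<in> gen_sublattice"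

definition FBL :: "(('a::distrib_lattice \<Rightarrow> real) \<Rightarrow> real) set" where
  "FBL = {f \<in> PH. \<forall>\<epsilon>>0. \<exists>g\<in>gen_sublattice. fbl_norm (\<lambda>\<phi>. f \<phi> - g \<phi>) < \<epsilon>}"

definition is_ideal :: "(('a::distrib_lattice \<Rightarrow> real) \<Rightarrow> real) set \<Rightarrow> bool" where
  "is_ideal B \<longleftrightarrow> B \<subseteq> FBL \<and> (\<lambda>\<phi>. 0) \<in> B \<and>
     (\<forall>f\<in>B. \<forall>g\<in>B. (\<lambda>\<phi>. f \<phi> + g \<phi>) \<in> B) \<and>
     (\<forall>f\<in>B. \<forall>c::real. (\<lambda>\<phi>. c * f \<phi>) \<in> B) \<and>
     (\<forall>f\<in>B. \<forall>g\<in>FBL. (\<forall>\<phi>. \<bar>g \<phi>\<bar> \<le> \<bar>f \<phi>\<bar>) \<longrightarrow> g \<in> B)"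

definition is_sup_in :: "(('a::distrib_lattice \<Rightarrow> real) \<Rightarrow> real) set \<Rightarrow>
     (('a \<Rightarrow> real) \<Rightarrow> real) set \<Rightarrow> (('a \<Rightarrow> real) \<Rightarrow> real) \<Rightarrow> bool" where
  "is_sup_in E A s \<longleftrightarrow> s \<in> E \<and> (\<forall>a\<in>A. a \<le> s) \<and> (\<forall>u\<in>E. (\<forall>a\<in>A. a \<le> u) \<longrightarrow> s \<le> u)"

definition is_band :: "(('a::distrib_lattice \<Rightarrow> real) \<Rightarrow> real) set \<Rightarrow> bool" where
  "is_band B \<longleftrightarrow> is_ideal B \<and> (\<forall>A s. A \<subseteq> B \<longrightarrow> is_sup_in FBL A s \<longrightarrow> s \<in> B)"

definition disjoint_complement :: "(('a::distrib_lattice \<Rightarrow> real) \<Rightarrow> real) set \<Rightarrow>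
     (('a \<Rightarrow> real) \<Rightarrow> real) set" where
  "disjoint_complement B = {g \<in> FBL. \<forall>f\<in>B. \<forall>\<phi>. min \<bar>f \<phi>\<bar> \<bar>g \<phi>\<bar> = 0}"

definition is_projection_band :: "(('a::distrib_lattice \<Rightarrow> real) \<Rightarrow> real) set \<Rightarrow> bool" where
  "is_projection_band B \<longleftrightarrow> is_band B \<and>
     (\<forall>f\<in>FBL. \<exists>g\<in>B. \<exists>h\<in>disjoint_complement B. f = (\<lambda>\<phi>. g \<phi> + h \<phi>))"

end

theory Submission imports Defs "HOL-Analysis.Analysis" begin
definition adm :: "('a::distrib_lattice \<Rightarrow> real) list \<Rightarrow> bool" where
  "adm xs \<longleftrightarrow> set xs \<subseteq> Lstar \<and> (\<forall>x. (\<Sum>\<phi>\<leftarrow>xs. \<bar>\<phi> x\<bar>) \<le> 1)"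

lemma norm_sums_adm: "norm_sums f = {(\<Sum>\<phi>\<leftarrow>xs. \<bar>f \<phi>\<bar>) | xs. adm xs}"
  by (simp add: norm_sums_def adm_def)

lemma bdd_ns_iff: "bdd_above (norm_sums f) \<longleftrightarrow> (\<exists>C. \<forall>xs. adm xs \<longrightarrow> (\<Sum>\<phi>\<leftarrow>xs. \<bar>f \<phi>\<bar>) \<le> C)"
  unfolding norm_sums_adm bdd_above_def by blast

lemma bdd_ns_comb:
  assumes "bdd_above (norm_sums f)" "bdd_above (norm_sums g)" "a \<ge> 0" "b \<ge> 0"
    and "\<And>\<phi>. \<phi> \<in> Lstar \<Longrightarrow> \<bar>h \<phi>\<bar> \<le> a * \<bar>f \<phi>\<bar> + b * \<bar>g \<phi>\<bar>"
  shows "bdd_above (norm_sums h)"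
proof -
  obtain C1 where C1: "\<And>xs. adm xs \<Longrightarrow> (\<Sum>\<phi>\<leftarrow>xs. \<bar>f \<phi>\<bar>) \<le> C1" using assms(1) bdd_ns_iff by blast
  obtain C2 where C2: "\<And>xs. adm xs \<Longrightarrow> (\<Sum>\<phi>\<leftarrow>xs. \<bar>g \<phi>\<bar>) \<le> C2" using assms(2) bdd_ns_iff by blast
  have "(\<Sum>\<phi>\<leftarrow>xs. \<bar>h \<phi>\<bar>) \<le> a * C1 + b * C2" if "adm xs" for xs
  proof -
    have "(\<Sum>\<phi>\<leftarrow>xs. \<bar>h \<phi>\<bar>) \<le> (\<Sum>\<phi>\<leftarrow>xs. a * \<bar>f \<phi>\<bar> + b * \<bar>g \<phi>\<bar>)"
      by (rule sum_list_mono) (use that assms(5) in \<open>auto simp: adm_def\<close>)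
    also have "\<dots> = a * (\<Sum>\<phi>\<leftarrow>xs. \<bar>f \<phi>\<bar>) + b * (\<Sum>\<phi>\<leftarrow>xs. \<bar>g \<phi>\<bar>)"
      by (simp add: sum_list_addf sum_list_const_mult)
    also have "\<dots> \<le> a * C1 + b * C2"
      using C1[OF that] C2[OF that] assms(3,4) by (intro add_mono mult_left_mono) auto
    finally show ?thesis .
  qed
  then show ?thesis unfolding bdd_ns_iff by blast
qed

lemma delta_bdd: "bdd_above (norm_sums (delta x))"
proof -
  have "(\<Sum>\<phi>\<leftarrow>xs. \<bar>delta x \<phi>\<bar>) \<le> 1" if "adm xs" for xs
  proof -
    have "(\<Sum>\<phi>\<leftarrow>xs. \<bar>delta x \<phi>\<bar>) = (\<Sum>\<phi>\<leftarrow>xs. \<bar>\<phi> x\<bar>)"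
      using that by (intro arg_cong[where f=sum_list] map_cong) (auto simp: adm_def delta_def)
    also have "\<dots> \<le> 1" using that by (auto simp: adm_def)
    finally show ?thesis .
  qed
  then show ?thesis unfolding bdd_ns_iff by blast
qed

lemma zero_bdd: "bdd_above (norm_sums (\<lambda>\<phi>. 0))"
  using bdd_ns_iff by force

lemma abs_max_le: "\<bar>max a b\<bar> \<le> \<bar>a\<bar> + \<bar>b::real\<bar>" by linarith
lemma abs_min_le: "\<bar>min a b\<bar> \<le> \<bar>a\<bar> + \<bar>b::real\<bar>" by linarith
lemma abs_add_le1: "\<bar>a + b\<bar> \<le> \<bar>a\<bar> + \<bar>b::real\<bar>" by linarith

lemma gen_bdd: "g \<in> gen_sublattice \<Longrightarrow> bdd_above (norm_sums g)"
proof (induction rule: gen_sublattice.induct)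
  case (gen_delta x) then show ?case by (rule delta_bdd)
next
  case gen_zero then show ?case by (rule zero_bdd)
next
  case (gen_add f g) show ?case by (rule bdd_ns_comb[where a=1 and b=1 and f=f and g=g]) (use gen_add.IH in \<open>auto intro: abs_add_le1\<close>)
next
  case (gen_scale f c) show ?case by (rule bdd_ns_comb[where a="\<bar>c\<bar>" and b=0 and g=f and f=f]) (use gen_scale.IH in \<open>auto simp: abs_mult\<close>)
next
  case (gen_max f g) show ?case by (rule bdd_ns_comb[where a=1 and b=1 and f=f and g=g]) (use gen_max.IH in \<open>auto intro: abs_max_le\<close>)
next
  case (gen_min f g) show ?case by (rule bdd_ns_comb[where a=1 and b=1 and f=f and g=g]) (use gen_min.IH in \<open>auto intro: abs_min_le\<close>)
qed

lemma adm_single: "\<phi> \<in> Lstar \<Longrightarrow> adm [\<phi>]"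
  by (auto simp: adm_def Lstar_def abs_le_iff)

lemma pointwise_le_norm:
  assumes "bdd_above (norm_sums f)" "\<phi> \<in> Lstar"
  shows "\<bar>f \<phi>\<bar> \<le> fbl_norm f"
proof -
  have "\<bar>f \<phi>\<bar> \<in> norm_sums f" unfolding norm_sums_adm using adm_single[OF assms(2)]
    by (auto intro!: exI[of _ "[\<phi>]"])
  then show ?thesis unfolding fbl_norm_def using assms(1) by (rule cSup_upper)
qed

lemma fbl_norm_zero: "fbl_norm (\<lambda>\<phi>::('a::distrib_lattice \<Rightarrow> real). 0::real) = (0::real)"
proof -
  have "norm_sums (\<lambda>\<phi>::('a::distrib_lattice \<Rightarrow> real). 0::real) = {0::real}"
    unfolding norm_sums_adm by (auto simp: adm_def intro!: exI[of _ "[]"])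
  then show ?thesis by (simp add: fbl_norm_def)
qed

lemma delta_FBL: "delta x \<in> FBL"
proof -
  have "delta x \<in> PH"
    unfolding PH_def pos_homogeneous_def using delta_bdd by (auto simp: delta_def)
  moreover have "fbl_norm (\<lambda>\<phi>. delta x \<phi> - delta x \<phi>) = 0" using fbl_norm_zero by simp
  ultimately show ?thesis unfolding FBL_def by (auto intro!: bexI[of _ "delta x"] gen_delta)
qed

lemma gen_cont:
  assumes "g \<in> gen_sublattice" "\<And>t. t \<in> T \<Longrightarrow> p t \<in> Lstar" "\<And>x. continuous_on T (\<lambda>t. p t x)"
  shows "continuous_on T (\<lambda>t. g (p t))"
  using assms(1)
proof (induction rule: gen_sublattice.induct)
  case (gen_delta x)
  have "continuous_on T (\<lambda>t. p t x)" by (rule assms(3))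
  then show ?case by (rule continuous_on_cong[THEN iffD1, rotated 2]) (auto simp: delta_def assms(2))
qed (auto intro!: continuous_intros)

lemma FBL_diff_bdd:
  assumes "f \<in> FBL" "g \<in> gen_sublattice"
  shows "bdd_above (norm_sums (\<lambda>\<phi>. f \<phi> - g \<phi>))"
proof -
  have "bdd_above (norm_sums f)" using assms(1) by (auto simp: FBL_def PH_def)
  then show ?thesis using gen_bdd[OF assms(2)] by (rule bdd_ns_comb[where a=1 and b=1]) auto
qed

lemma FBL_cont:
  fixes T :: "real set"
  assumes "f \<in> FBL" "\<And>t. t \<in> T \<Longrightarrow> p t \<in> Lstar" "\<And>x. continuous_on T (\<lambda>t. p t x)"
  shows "continuous_on T (\<lambda>t. f (p t))"
  unfolding continuous_on_iff
proof (intro ballI allI impI)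
  fix t :: real and e :: real
  assume t: "t \<in> T" and e: "e > 0"
  have e3: "e/3 > 0" using e by simp
  obtain g where g: "g \<in> gen_sublattice" "fbl_norm (\<lambda>\<phi>. f \<phi> - g \<phi>) < e/3"
    using assms(1) e3 unfolding FBL_def by blast
  have close: "\<bar>f (p s) - g (p s)\<bar> < e/3" if "s \<in> T" for s
    using pointwise_le_norm[OF FBL_diff_bdd[OF assms(1) g(1)] assms(2)[OF that]] g(2) by simp
  have "continuous_on T (\<lambda>t. g (p t))" by (rule gen_cont[OF g(1) assms(2,3)])
  then have "\<forall>x\<in>T. \<forall>\<epsilon>>0. \<exists>\<delta>>0. \<forall>x'\<in>T. dist x' x < \<delta> \<longrightarrow> dist (g (p x')) (g (p x)) < \<epsilon>"
    unfolding continuous_on_iff .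
  then obtain d where d: "d > 0" "\<And>s. s \<in> T \<Longrightarrow> dist s t < d \<Longrightarrow> dist (g (p s)) (g (p t)) < e/3"
    using t e3 by blast
  show "\<exists>d>0. \<forall>s\<in>T. dist s t < d \<longrightarrow> dist (f (p s)) (f (p t)) < e"
  proof (intro exI[of _ d] conjI ballI impI)
    fix s assume s: "s \<in> T" "dist s t < d"
    have "dist (g (p s)) (g (p t)) < e/3" using d(2) s by blast
    then show "dist (f (p s)) (f (p t)) < e" using close[OF s(1)] close[OF t] unfolding dist_real_def by arith
  qed (use d in auto)
qed

definition inU :: "(('a::distrib_lattice \<Rightarrow> real) \<Rightarrow> real) set \<Rightarrow> ('a \<Rightarrow> real) \<Rightarrow> bool" where
  "inU B \<phi> \<longleftrightarrow> (\<exists>g\<in>B. g \<phi> \<noteq> 0)"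
definition inV :: "(('a::distrib_lattice \<Rightarrow> real) \<Rightarrow> real) set \<Rightarrow> ('a \<Rightarrow> real) \<Rightarrow> bool" where
  "inV B \<phi> \<longleftrightarrow> (\<exists>h\<in>disjoint_complement B. h \<phi> \<noteq> 0)"
definition nz :: "('a \<Rightarrow> real) \<Rightarrow> bool" where
  "nz \<phi> \<longleftrightarrow> (\<exists>x. \<phi> x \<noteq> 0)"

lemma proj_sub: "is_projection_band B \<Longrightarrow> B \<subseteq> FBL"
  by (auto simp: is_projection_band_def is_band_def is_ideal_def)

lemma proj_zero: "is_projection_band B \<Longrightarrow> (\<lambda>\<phi>. 0) \<in> B"
  by (auto simp: is_projection_band_def is_band_def is_ideal_def)

lemma UV_cover:
  assumes "is_projection_band B" "\<phi> \<in> Lstar" "nz \<phi>"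
  shows "inU B \<phi> \<or> inV B \<phi>"
proof -
  obtain x where x: "\<phi> x \<noteq> 0" using assms(3) by (auto simp: nz_def)
  obtain g h where gh: "g \<in> B" "h \<in> disjoint_complement B" "delta x = (\<lambda>\<phi>. g \<phi> + h \<phi>)"
    using assms(1) delta_FBL unfolding is_projection_band_def by blast
  have "g \<phi> + h \<phi> \<noteq> 0" using x assms(2) fun_cong[OF gh(3), of \<phi>] by (simp add: delta_def)
  then show ?thesis using gh unfolding inU_def inV_def by force
qed

lemma UV_disj:
  assumes "inU B \<phi>" "inV B \<phi>" shows False
proof -
  obtain g where g: "g \<in> B" "g \<phi> \<noteq> 0" using assms(1) unfolding inU_def by blast
  obtain h where h: "h \<in> disjoint_complement B" "h \<phi> \<noteq> 0" using assms(2) unfolding inV_def by blast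
  have "min \<bar>g \<phi>\<bar> \<bar>h \<phi>\<bar> = 0" using h(1) g(1) unfolding disjoint_complement_def by blast
  then show False using g(2) h(2) by (simp add: min_def split: if_splits)
qed

lemma openin_U:
  fixes T :: "real set"
  assumes "S \<subseteq> FBL" "\<And>t. t \<in> T \<Longrightarrow> p t \<in> Lstar" "\<And>x. continuous_on T (\<lambda>t. p t x)"
  shows "openin (top_of_set T) {t\<in>T. \<exists>g\<in>S. g (p t) \<noteq> 0}"
proof -
  have eq: "{t\<in>T. \<exists>g\<in>S. g (p t) \<noteq> 0} = (\<Union>g\<in>S. T \<inter> (\<lambda>t. g (p t)) -` (-{0}))" by auto
  have "openin (top_of_set T) (T \<inter> (\<lambda>t. g (p t)) -` (-{0}))" if "g \<in> S" for g
  proof (rule continuous_openin_preimage_gen[of T "\<lambda>t. g (p t)" "-{0}"])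
    show "continuous_on T (\<lambda>t. g (p t))"
    proof (rule FBL_cont[where f=g and T=T and p=p])
      show "g \<in> FBL" using that assms(1) by blast
    qed (fact assms(2), fact assms(3))
  qed auto
  then show ?thesis unfolding eq by (intro openin_Union) blast
qed

lemma path_lemma:
  assumes B: "is_projection_band B"
    and p: "\<And>t. t \<in> {-1..1} \<Longrightarrow> p t \<in> Lstar \<and> nz (p t)" "\<And>x. continuous_on {-1..1::real} (\<lambda>t. p t x)"
  shows "inU B (p (-1)) = inU B (p 1)"
proof -
  let ?T = "{-1..1::real}"
  let ?E1 = "{t\<in>?T. \<exists>g\<in>B. g (p t) \<noteq> 0}"
  let ?E2 = "{t\<in>?T. \<exists>g\<in>disjoint_complement B. g (p t) \<noteq> 0}"
  have o1: "openin (top_of_set ?T) ?E1" by (rule openin_U[OF proj_sub[OF B]]) (use p in auto)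
  have o2: "openin (top_of_set ?T) ?E2" by (rule openin_U) (use p in \<open>auto simp: disjoint_complement_def\<close>)
  have cov: "?T \<subseteq> ?E1 \<union> ?E2" using UV_cover[OF B] p(1) unfolding inU_def inV_def by blast
  have dis: "?E1 \<inter> ?E2 = {}"
  proof (rule equals0I)
    fix t assume "t \<in> ?E1 \<inter> ?E2"
    then have "inU B (p t)" "inV B (p t)" unfolding inU_def inV_def by auto
    then show False by (rule UV_disj)
  qed
  have nd: "\<not> (?E1 \<noteq> {} \<and> ?E2 \<noteq> {})"
    using connected_Icc[of "-1::real" 1] o1 o2 cov dis unfolding connected_openin by blast
  have m1: "-1 \<in> ?T" and p1: "1 \<in> ?T" by auto
  show ?thesis
  proof
    assume "inU B (p (-1))"
    then have "-1 \<in> ?E1" using m1 unfolding inU_def by auto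
    then have "?E2 = {}" using nd by blast
    then have "\<not> inV B (p 1)" using p1 unfolding inV_def by auto
    then show "inU B (p 1)" using UV_cover[OF B] p(1)[OF p1] by blast
  next
    assume "inU B (p 1)"
    then have "1 \<in> ?E1" using p1 unfolding inU_def by auto
    then have "?E2 = {}" using nd by blast
    then have "\<not> inV B (p (-1))" using m1 unfolding inV_def by auto
    then show "inU B (p (-1))" using UV_cover[OF B] p(1)[OF m1] by blast
  qed
qed

lemma Lstar_max: "\<phi> \<in> Lstar \<Longrightarrow> -1 \<le> t \<Longrightarrow> t \<le> 1 \<Longrightarrow> (\<lambda>x. max (\<phi> x) t) \<in> Lstar"
  unfolding Lstar_def by (auto simp: max_def min_def)

lemma Lstar_min: "\<phi> \<in> Lstar \<Longrightarrow> -1 \<le> t \<Longrightarrow> t \<le> 1 \<Longrightarrow> (\<lambda>x. min (\<phi> x) t) \<in> Lstar"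
  unfolding Lstar_def by (auto simp: max_def min_def)

lemma Lstar_le: "\<phi> \<in> Lstar \<Longrightarrow> -1 \<le> \<phi> x \<and> \<phi> x \<le> 1"
  unfolding Lstar_def by auto

lemma path_pos:
  assumes B: "is_projection_band B" and "\<phi> \<in> Lstar" "\<phi> x0 > 0"
  shows "inU B \<phi> = inU B (\<lambda>x. 1)"
proof -
  define p where "p = (\<lambda>t::real. \<lambda>x. max (\<phi> x) t)"
  have "inU B (p (-1)) = inU B (p 1)"
  proof (rule path_lemma[OF B])
    fix t :: real assume "t \<in> {-1..1}"
    then show "p t \<in> Lstar \<and> nz (p t)" unfolding p_def nz_def using Lstar_max[OF assms(2)] assms(3)
      by (metis atLeastAtMost_iff max.strict_coboundedI1 order_less_irrefl)
  next
    fix x show "continuous_on {-1..1} (\<lambda>t. p t x)" unfolding p_def by (intro continuous_intros)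
  qed
  moreover have "p (-1) = \<phi>"
  proof (rule ext)
    fix x have "-1 \<le> \<phi> x \<and> \<phi> x \<le> 1" by (rule Lstar_le[OF assms(2)])
    then show "p (-1) x = \<phi> x" by (simp add: p_def max_def)
  qed
  moreover have "p 1 = (\<lambda>x. 1)"
  proof (rule ext)
    fix x have "-1 \<le> \<phi> x \<and> \<phi> x \<le> 1" by (rule Lstar_le[OF assms(2)])
    then show "p 1 x = 1" by (simp add: p_def max_def)
  qed
  ultimately show ?thesis by simp
qed

lemma path_neg:
  assumes B: "is_projection_band B" and "\<phi> \<in> Lstar" "\<phi> x0 < 0"
  shows "inU B \<phi> = inU B (\<lambda>x. -1)"
proof -
  define p where "p = (\<lambda>t::real. \<lambda>x. min (\<phi> x) (-t))"
  have "inU B (p (-1)) = inU B (p 1)"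
  proof (rule path_lemma[OF B])
    fix t :: real assume "t \<in> {-1..1}"
    then show "p t \<in> Lstar \<and> nz (p t)" unfolding p_def nz_def using Lstar_min[OF assms(2), of "-t"] assms(3)
      by (metis atLeastAtMost_iff min.strict_coboundedI1 order_less_irrefl neg_le_iff_le minus_minus)
  next
    fix x show "continuous_on {-1..1} (\<lambda>t. p t x)" unfolding p_def by (intro continuous_intros)
  qed
  moreover have "p (-1) = \<phi>"
  proof (rule ext)
    fix x have "-1 \<le> \<phi> x \<and> \<phi> x \<le> 1" by (rule Lstar_le[OF assms(2)])
    then show "p (-1) x = \<phi> x" by (simp add: p_def min_def)
  qed
  moreover have "p 1 = (\<lambda>x. -1)"
  proof (rule ext)
    fix x have "-1 \<le> \<phi> x \<and> \<phi> x \<le> 1" by (rule Lstar_le[OF assms(2)])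
    then show "p 1 x = -1" by (simp add: p_def min_def)
  qed
  ultimately show ?thesis by simp
qed

lemma vanish:
  assumes "f \<in> FBL" "\<And>\<phi>. \<phi> \<in> Lstar \<Longrightarrow> nz \<phi> \<Longrightarrow> f \<phi> = 0"
  shows "f = (\<lambda>\<phi>. 0)"
proof
  fix \<phi> :: "'a \<Rightarrow> real"
  have PH: "f \<in> PH" using assms(1) by (simp add: FBL_def)
  show "f \<phi> = 0"
  proof (cases "\<phi> \<in> Lstar")
    case False then show ?thesis using PH by (simp add: PH_def)
  next
    case True
    show ?thesis
    proof (cases "nz \<phi>")
      case True then show ?thesis using assms(2) \<open>\<phi> \<in> Lstar\<close> by blast
    next
      case False
      then have eq: "(\<lambda>x. 0 * \<phi> x) = \<phi>" by (auto simp: nz_def)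
      have "pos_homogeneous f" using PH by (simp add: PH_def)
      then have H: "\<And>\<psi> c. \<psi> \<in> Lstar \<Longrightarrow> c \<ge> 0 \<Longrightarrow> (\<lambda>x. c * \<psi> x) \<in> Lstar \<Longrightarrow> f (\<lambda>x. c * \<psi> x) = c * f \<psi>"
        unfolding pos_homogeneous_def by blast
      have "(\<lambda>x. 0 * \<phi> x) \<in> Lstar" using eq True by simp
      then have "f (\<lambda>x. 0 * \<phi> x) = 0 * f \<phi>" by (rule H[OF True order_refl])
      then show ?thesis using eq by simp
    qed
  qed
qed

definition filt :: "'a::distrib_lattice \<Rightarrow> 'a \<Rightarrow> 'a set set" where
  "filt a b = {F. b \<in> F \<and> a \<notin> F \<and> (\<forall>x y. x \<in> F \<longrightarrow> x \<le> y \<longrightarrow> y \<in> F) \<and> (\<forall>x y. x \<in> F \<longrightarrow> y \<in> F \<longrightarrow> inf x y \<in> F)}"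

lemma prime_filter:
  fixes a b :: "'a::distrib_lattice"
  assumes "a < b"
  shows "\<exists>M. b \<in> M \<and> a \<notin> M \<and> (\<forall>x y. x \<in> M \<longrightarrow> x \<le> y \<longrightarrow> y \<in> M) \<and> (\<forall>x y. x \<in> M \<longrightarrow> y \<in> M \<longrightarrow> inf x y \<in> M)
          \<and> (\<forall>x y. sup x y \<in> M \<longrightarrow> x \<in> M \<or> y \<in> M)"
proof -
  have "\<forall>C\<in>chains (filt a b). \<exists>U\<in>filt a b. \<forall>X\<in>C. X \<subseteq> U"
  proof
    fix C assume C: "C \<in> chains (filt a b)"
    show "\<exists>U\<in>filt a b. \<forall>X\<in>C. X \<subseteq> U"
    proof (cases "C = {}")
      case True
      have "{z. b \<le> z} \<in> filt a b" using assms by (auto simp: filt_def)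
      then show ?thesis using True by blast
    next
      case False
      have sub: "C \<subseteq> filt a b" and ch: "\<And>X Y. X \<in> C \<Longrightarrow> Y \<in> C \<Longrightarrow> X \<subseteq> Y \<or> Y \<subseteq> X"
        using C by (auto simp: chains_def chain_subset_def)
      have "\<Union>C \<in> filt a b"
        unfolding filt_def
      proof (intro CollectI conjI allI impI)
        show "b \<in> \<Union>C" using False sub by (auto simp: filt_def)
        show "a \<notin> \<Union>C" using sub by (auto simp: filt_def)
      next
        fix x y assume "x \<in> \<Union>C" "x \<le> y" then show "y \<in> \<Union>C" using sub by (auto simp: filt_def)
      next
        fix x y assume "x \<in> \<Union>C" "y \<in> \<Union>C"
        then obtain X Y where XY: "X \<in> C" "Y \<in> C" "x \<in> X" "y \<in> Y" by blast
        show "inf x y \<in> \<Union>C"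
          using ch[OF XY(1,2)]
        proof
          assume "X \<subseteq> Y"
          have "Y \<in> filt a b" using XY sub by blast
          then have "inf x y \<in> Y" using XY \<open>X \<subseteq> Y\<close> unfolding filt_def by blast
          then show ?thesis using XY by blast
        next
          assume "Y \<subseteq> X"
          have "X \<in> filt a b" using XY sub by blast
          then have "inf x y \<in> X" using XY \<open>Y \<subseteq> X\<close> unfolding filt_def by blast
          then show ?thesis using XY by blast
        qed
      qed
      then show ?thesis by blast
    qed
  qed
  from Zorn_Lemma2[OF this] obtain M where M: "M \<in> filt a b" "\<And>X. X \<in> filt a b \<Longrightarrow> M \<subseteq> X \<Longrightarrow> X = M"
    by blast
  have Mb: "b \<in> M" and Ma: "a \<notin> M" and Mup: "\<And>x y. x \<in> M \<Longrightarrow> x \<le> y \<Longrightarrow> y \<in> M"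
    and Minf: "\<And>x y. x \<in> M \<Longrightarrow> y \<in> M \<Longrightarrow> inf x y \<in> M" using M(1) unfolding filt_def by blast+
  have ext: "\<exists>m\<in>M. inf m x \<le> a" if "x \<notin> M" for x
  proof (rule ccontr)
    assume na: "\<not> (\<exists>m\<in>M. inf m x \<le> a)"
    define Mx where "Mx = {z. \<exists>m\<in>M. inf m x \<le> z}"
    have bx: "inf b x \<le> b" "inf b x \<le> x" by simp_all
    have "Mx \<in> filt a b"
      unfolding filt_def
    proof (intro CollectI conjI allI impI)
      show "b \<in> Mx" unfolding Mx_def using Mb bx by blast
      show "a \<notin> Mx" unfolding Mx_def using na by blast
    next
      fix z w assume zw: "z \<in> Mx" "z \<le> w"
      then obtain m where "m \<in> M" "inf m x \<le> z" unfolding Mx_def by blast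
      moreover from this(2) zw(2) have "inf m x \<le> w" by (rule order_trans)
      ultimately show "w \<in> Mx" unfolding Mx_def by blast
    next
      fix z w assume "z \<in> Mx" "w \<in> Mx"
      then obtain m1 m2 where m: "m1 \<in> M" "m2 \<in> M" "inf m1 x \<le> z" "inf m2 x \<le> w" unfolding Mx_def by blast
      have "inf (inf m1 m2) x \<le> inf m1 x" by (rule inf_mono) simp_all
      then have 1: "inf (inf m1 m2) x \<le> z" using m(3) by (rule order_trans)
      have "inf (inf m1 m2) x \<le> inf m2 x" by (rule inf_mono) simp_all
      then have 2: "inf (inf m1 m2) x \<le> w" using m(4) by (rule order_trans)
      from 1 2 have "inf (inf m1 m2) x \<le> inf z w" by (rule le_infI)
      then show "inf z w \<in> Mx" unfolding Mx_def using Minf[OF m(1,2)] by blast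
    qed
    moreover have "M \<subseteq> Mx"
    proof
      fix z assume "z \<in> M"
      moreover have "inf z x \<le> z" by simp
      ultimately show "z \<in> Mx" unfolding Mx_def by blast
    qed
    ultimately have "Mx = M" using M(2) by blast
    moreover have "x \<in> Mx" unfolding Mx_def using Mb bx by blast
    ultimately show False using that by simp
  qed
  have prime: "x \<in> M \<or> y \<in> M" if "sup x y \<in> M" for x y
  proof (rule ccontr)
    assume "\<not> (x \<in> M \<or> y \<in> M)"
    then have "x \<notin> M" "y \<notin> M" by simp_all
    then obtain m1 m2 where m: "m1 \<in> M" "m2 \<in> M" "inf m1 x \<le> a" "inf m2 y \<le> a" using ext by meson
    define m where "m = inf m1 m2"
    have "inf m (sup x y) \<in> M" using Minf[OF Minf[OF m(1,2)] that] by (simp add: m_def)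
    moreover have "inf m (sup x y) = sup (inf m x) (inf m y)" by (rule inf_sup_distrib1)
    moreover have "inf m x \<le> inf m1 x" unfolding m_def by (rule inf_mono) simp_all
    then have "inf m x \<le> a" using m(3) by (rule order_trans)
    moreover have "inf m y \<le> inf m2 y" unfolding m_def by (rule inf_mono) simp_all
    then have "inf m y \<le> a" using m(4) by (rule order_trans)
    ultimately have "sup (inf m x) (inf m y) \<in> M" "sup (inf m x) (inf m y) \<le> a" by (simp_all add: sup_least)
    then have "a \<in> M" by (rule Mup)
    then show False using Ma by simp
  qed
  show ?thesis by (rule exI[of _ M]) (use Mb Ma Mup Minf prime in blast)
qed

lemma two_valued:
  fixes a b :: "'a::distrib_lattice"
  assumes "a < b"
  shows "\<exists>\<psi>\<in>Lstar. \<psi> a = -1 \<and> \<psi> b = 1"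
proof -
  obtain M where M: "b \<in> M" "a \<notin> M" "\<And>x y. x \<in> M \<Longrightarrow> x \<le> y \<Longrightarrow> y \<in> M"
    "\<And>x y. x \<in> M \<Longrightarrow> y \<in> M \<Longrightarrow> inf x y \<in> M" "\<And>x y. sup x y \<in> M \<Longrightarrow> x \<in> M \<or> y \<in> M"
    using prime_filter[OF assms] by blast
  define \<psi> where "\<psi> = (\<lambda>z. if z \<in> M then 1 else -1::real)"
  have s: "sup x y \<in> M \<longleftrightarrow> x \<in> M \<or> y \<in> M" for x y using M(3,5) by (meson sup_ge1 sup_ge2)
  have i: "inf x y \<in> M \<longleftrightarrow> x \<in> M \<and> y \<in> M" for x y using M(3,4) by (meson inf_le1 inf_le2)
  have "\<psi> \<in> Lstar" unfolding Lstar_def \<psi>_def using s i by auto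
  then show ?thesis using M(1,2) by (intro bexI[of _ \<psi>]) (auto simp: \<psi>_def)
qed


theorem mainTheorem11:
  fixes B :: "(('a::distrib_lattice \<Rightarrow> real) \<Rightarrow> real) set"
  assumes "\<exists>x y :: 'a. x \<noteq> y"
    and "is_projection_band B"
  shows "B = {(\<lambda>\<phi>. 0)} \<or> B = FBL"
proof -
  note Bp = assms(2)
  obtain a b :: 'a where ab: "a < b"
  proof -
    obtain x y :: 'a where xy: "x \<noteq> y" using assms(1) by blast
    show ?thesis
    proof (cases "inf x y = x")
      case True then have "x < y" using xy by (metis inf.absorb_iff1 order_less_le)
      then show ?thesis by (rule that)
    next
      case False then have "inf x y < x" by (simp add: order_less_le)
      then show ?thesis by (rule that)
    qed
  qed
  obtain \<psi> where psi: "\<psi> \<in> Lstar" "\<psi> a = -1" "\<psi> b = 1" using two_valued[OF ab] by blast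
  have one_mone: "inU B (\<lambda>x. 1) = inU B (\<lambda>x. -1)"
    using path_pos[OF Bp psi(1), of b] path_neg[OF Bp psi(1), of a] psi by simp
  have all: "inU B \<phi> = inU B (\<lambda>x. 1)" if phiL: "\<phi> \<in> Lstar" and phinz: "nz \<phi>" for \<phi>
  proof -
    obtain x0 where "\<phi> x0 \<noteq> 0" using phinz by (auto simp: nz_def)
    then have "\<phi> x0 > 0 \<or> \<phi> x0 < 0" by linarith
    then show ?thesis
    proof
      assume "\<phi> x0 > 0" then show ?thesis by (rule path_pos[OF Bp phiL])
    next
      assume "\<phi> x0 < 0" then have "inU B \<phi> = inU B (\<lambda>x. -1)" by (rule path_neg[OF Bp phiL])
      then show ?thesis using one_mone by simp
    qed
  qed
  show ?thesis
  proof (cases "inU B (\<lambda>x. 1)")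
    case True
    have hz: "h = (\<lambda>\<phi>. 0)" if "h \<in> disjoint_complement B" for h
    proof (rule vanish)
      show "h \<in> FBL" using that by (simp add: disjoint_complement_def)
      fix \<phi> :: "'a \<Rightarrow> real" assume "\<phi> \<in> Lstar" "nz \<phi>"
      then have "inU B \<phi>" using all True by blast
      then have "\<not> inV B \<phi>" using UV_disj by blast
      then show "h \<phi> = 0" using that unfolding inV_def by blast
    qed
    have "FBL \<subseteq> B"
    proof
      fix f :: "('a \<Rightarrow> real) \<Rightarrow> real" assume "f \<in> FBL"
      then obtain g h where gh: "g \<in> B" "h \<in> disjoint_complement B" "f = (\<lambda>\<phi>. g \<phi> + h \<phi>)"
        using Bp unfolding is_projection_band_def by blast
      then have "f = g" using hz[OF gh(2)] by simp
      then show "f \<in> B" using gh by simp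
    qed
    then show ?thesis using proj_sub[OF Bp] by blast
  next
    case False
    have "g = (\<lambda>\<phi>. 0)" if "g \<in> B" for g
    proof (rule vanish)
      show "g \<in> FBL" using that proj_sub[OF Bp] by blast
      fix \<phi> :: "'a \<Rightarrow> real" assume "\<phi> \<in> Lstar" "nz \<phi>"
      then have "\<not> inU B \<phi>" using all False by blast
      then show "g \<phi> = 0" using that unfolding inU_def by blast
    qed
    then show ?thesis using proj_zero[OF Bp] by blast
  qed
qed

end
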